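(* For each integer $n\geq 6$ there exists a closed non-degenerate spherical $n$-gon whose lifted rolling monodromy for radius ratio $\rho=3$ is trivial.
   Context: A spherical polygon on the unit sphere $S^2$ has edges that are arcs of great circles; it is non-degenerate if no three consecutive vertices lie on a great circle. Identify $\mathbb{R}^3$ with the imaginary quaternions. For radius ratio $\rho$ (stationary radius over moving radius), rolling along the polygon is the curve $(\mathbf v(t),q(t))\in S^2\times S^3$ with $\mathbf v(t)$ traversing the polygon once, $q(0)=1$, and $(\rho+1)\dot{\mathbf v}=\boldsymbol\omega\times\mathbf v$, $\boldsymbol\omega\cdot\mathbf v=0$, where $\boldsymbol\omega=2\dot q\bar q$ (the angular velocity of the rotation $\mathbf x\mapsto q\mathbf x\bar q$). The lifted rolling monodromy is the final value of $q$; it is trivial if it equals $1$. *)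

theory Defs
  imports "HOL-Analysis.Analysis"
begin

text \<open>Quaternions as pairs (scalar part, vector part); R^3 is identified with the
imaginary quaternions via v \<mapsto> (0, v).\<close>

type_synonym quat = "real \<times> (real^3)"

definition qmult :: "quat \<Rightarrow> quat \<Rightarrow> quat" where
  "qmult p q = (fst p * fst q - snd p \<bullet> snd q,
                fst p *\<^sub>R snd q + fst q *\<^sub>R snd p + cross3 (snd p) (snd q))"

definition qconj :: "quat \<Rightarrow> quat" where
  "qconj p = (fst p, - snd p)"

definition qone :: quat where
  "qone = (1, 0)"

text \<open>Closed spherical n-gon with vertices V 0, ..., V (n-1) (indices taken mod n),
distinct unit vectors; edges are the (minor) great-circle arcs between consecutive vertices.\<close>

definition spherical_polygon :: "nat \<Rightarrow> (nat \<Rightarrow> real^3) \<Rightarrow> bool" where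
  "spherical_polygon n V \<longleftrightarrow> n \<ge> 3 \<and> (\<forall>i<n. norm (V i) = 1) \<and> inj_on V {..<n}"

text \<open>Non-degenerate: no three cyclically consecutive vertices lie on a great circle,
i.e. they are linearly independent (nonzero triple product).\<close>

definition nondegenerate_polygon :: "nat \<Rightarrow> (nat \<Rightarrow> real^3) \<Rightarrow> bool" where
  "nondegenerate_polygon n V \<longleftrightarrow>
     (\<forall>i<n. V (i mod n) \<bullet> cross3 (V ((i+1) mod n)) (V ((i+2) mod n)) \<noteq> 0)"

text \<open>Constant-speed parametrisation of the minor great-circle arc from a to b, s \<in> [0,1].\<close>

definition arc :: "real^3 \<Rightarrow> real^3 \<Rightarrow> real \<Rightarrow> real^3" where
  "arc a b s = (let \<theta> = arccos (a \<bullet> b) in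
                (sin ((1 - s) * \<theta>) / sin \<theta>) *\<^sub>R a + (sin (s * \<theta>) / sin \<theta>) *\<^sub>R b)"

definition polygon_curve :: "nat \<Rightarrow> (nat \<Rightarrow> real^3) \<Rightarrow> real \<Rightarrow> real^3" where
  "polygon_curve n V t =
     (let i = nat \<lfloor>t\<rfloor> in arc (V (i mod n)) (V ((i+1) mod n)) (t - of_int \<lfloor>t\<rfloor>))"

text \<open>q : [0,n] \<rightarrow> S^3 is a rolling (with radius ratio \<rho>) along the polygon:
q(0)=1, q continuous, and away from the vertex times (integers) the rolling equations
(\<rho>+1) v' = \<omega> \<times> v, \<omega> \<bullet> v = 0 hold with \<omega> = 2 q' conj(q).\<close>

definition rolling :: "real \<Rightarrow> nat \<Rightarrow> (nat \<Rightarrow> real^3) \<Rightarrow> (real \<Rightarrow> quat) \<Rightarrow> bool" where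
  "rolling \<rho> n V q \<longleftrightarrow>
     q 0 = qone \<and> continuous_on {0..real n} q \<and>
     (\<forall>t\<in>{0..real n}. norm (q t) = 1) \<and>
     (\<forall>t\<in>{0<..<real n}. t \<notin> \<int> \<longrightarrow>
        (\<exists>q' v'. (q has_vector_derivative q') (at t) \<and>
                 (polygon_curve n V has_vector_derivative v') (at t) \<and>
                 (let \<omega> = qmult (2 *\<^sub>R q') (qconj (q t)) in
                    fst \<omega> = 0 \<and>
                    (\<rho> + 1) *\<^sub>R v' = cross3 (snd \<omega>) (polygon_curve n V t) \<and>
                    snd \<omega> \<bullet> polygon_curve n V t = 0)))"

text \<open>The lifted rolling monodromy is the final value q(n); it is trivial if it is 1.
(The rolling q is uniquely determined, so this is well defined.)\<close>

definition trivial_lifted_monodromy :: "real \<Rightarrow> nat \<Rightarrow> (nat \<Rightarrow> real^3) \<Rightarrow> bool" where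
  "trivial_lifted_monodromy \<rho> n V \<longleftrightarrow> (\<exists>q. rolling \<rho> n V q \<and> q (real n) = qone)"

end

theory Submission
  imports Defs
begin


lemma qmult_assoc: "qmult (qmult p q) r = qmult p (qmult q r)"
  unfolding qmult_def by (auto simp: cross3_simps forall_3 inner_add_left inner_add_right)

lemma qconj_qmult: "qconj (qmult p q) = qmult (qconj q) (qconj p)"
  unfolding qmult_def qconj_def by (auto simp: cross3_simps forall_3)

lemma qmult_qone_left[simp]: "qmult qone p = p" and qmult_qone_right[simp]: "qmult p qone = p"
  unfolding qmult_def qone_def by auto

lemma norm_quat_sq: "(norm (p::quat))^2 = (fst p)^2 + (snd p) \<bullet> (snd p)"
  by (cases p) (simp add: norm_Pair power2_norm_eq_inner)

lemma qmult_qconj_self: "qmult p (qconj p) = ((norm p)^2, 0)"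
  unfolding qmult_def qconj_def norm_quat_sq by (auto simp: power2_eq_square)

lemma norm_qmult: "norm (qmult p q) = norm p * norm q"
proof -
  have "(norm (qmult p q))^2 = (norm p * norm q)^2"
    unfolding power_mult_distrib norm_quat_sq qmult_def
    by (simp add: cross3_simps power2_eq_square)
  then show ?thesis by (simp add: power2_eq_iff_nonneg)
qed




lemma qmult_scaleR_left: "qmult (r *\<^sub>R p) q = r *\<^sub>R qmult p q"
  unfolding qmult_def by (auto simp: cross_mult_left algebra_simps)

lemma bl_qmult_left: "bounded_linear (\<lambda>p. qmult p C)"
proof -
  have "linear (\<lambda>p. qmult p C)"
    by (rule linearI) (auto simp: qmult_def cross_add_left algebra_simps inner_add_left cross_mult_left)
  then show ?thesis by (simp add: linear_conv_bounded_linear)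
qed

lemma arc_deriv:
  assumes "sin (arccos (a\<bullet>b)) \<noteq> 0"
  shows "((\<lambda>s. arc a b s) has_vector_derivative
     ((- arccos (a\<bullet>b) * cos ((1-s)*arccos (a\<bullet>b)) / sin (arccos (a\<bullet>b))) *\<^sub>R a +
      (arccos (a\<bullet>b) * cos (s*arccos (a\<bullet>b)) / sin (arccos (a\<bullet>b))) *\<^sub>R b)) (at s)"
  unfolding arc_def Let_def using assms
  by (auto intro!: derivative_eq_intros simp: field_simps)

lemma cross_cross_left: "cross3 (cross3 a b) v = (a \<bullet> v) *\<^sub>R b - (b \<bullet> v) *\<^sub>R a"
  by (simp add: cross3_simps forall_3)

lemma arc_cross:
  fixes a b :: "real^3"
  assumes "norm a = 1" "norm b = 1" "sin (arccos (a\<bullet>b)) \<noteq> 0" "-1 \<le> a \<bullet> b" "a \<bullet> b \<le> 1"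
  defines "\<theta> \<equiv> arccos (a\<bullet>b)"
  shows "cross3 (cross3 a b) (arc a b s) = (- cos ((1-s)*\<theta>)) *\<^sub>R a + cos (s*\<theta>) *\<^sub>R b"
    and "cross3 a b \<bullet> arc a b s = 0"
proof -
  have aa: "a \<bullet> a = 1" "b \<bullet> b = 1" using assms by (simp_all add: dot_square_norm)
  have c: "cos \<theta> = a \<bullet> b" using assms unfolding \<theta>_def by simp
  have S: "sin \<theta> \<noteq> 0" using assms unfolding \<theta>_def by simp
  have e1: "sin ((1-s)*\<theta>) * cos \<theta> + sin (s*\<theta>) = cos ((1-s)*\<theta>) * sin \<theta>"
  proof -
    have "s*\<theta> = \<theta> - (1-s)*\<theta>" by algebra
    then have "sin (s*\<theta>) = sin \<theta> * cos ((1-s)*\<theta>) - cos \<theta> * sin ((1-s)*\<theta>)"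
      by (metis sin_diff)
    then show ?thesis by simp
  qed
  have e2: "sin ((1-s)*\<theta>) + sin (s*\<theta>) * cos \<theta> = cos (s*\<theta>) * sin \<theta>"
  proof -
    have "(1-s)*\<theta> = \<theta> - s*\<theta>" by algebra
    then have "sin ((1-s)*\<theta>) = sin \<theta> * cos (s*\<theta>) - cos \<theta> * sin (s*\<theta>)"
      by (metis sin_diff)
    then show ?thesis by simp
  qed
  have av: "a \<bullet> arc a b s = cos (s*\<theta>)"
    unfolding arc_def Let_def \<theta>_def[symmetric] using aa c S e2
    by (simp add: inner_add_right field_simps inner_commute)
  have bv: "b \<bullet> arc a b s = cos ((1-s)*\<theta>)"
    unfolding arc_def Let_def \<theta>_def[symmetric] using aa c S e1
    by (simp add: inner_add_right field_simps inner_commute)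
  show "cross3 (cross3 a b) (arc a b s) = (- cos ((1-s)*\<theta>)) *\<^sub>R a + cos (s*\<theta>) *\<^sub>R b"
    unfolding cross_cross_left av bv by simp
  show "cross3 a b \<bullet> arc a b s = 0"
    unfolding arc_def Let_def by (simp add: inner_add_right dot_cross_self)
qed




definition th :: "(nat \<Rightarrow> real^3) \<Rightarrow> nat \<Rightarrow> nat \<Rightarrow> real" where
  "th V n i = arccos (V (i mod n) \<bullet> V ((i+1) mod n))"

definition Nv :: "(nat \<Rightarrow> real^3) \<Rightarrow> nat \<Rightarrow> nat \<Rightarrow> real^3" where
  "Nv V n i = (1 / sin (th V n i)) *\<^sub>R cross3 (V (i mod n)) (V ((i+1) mod n))"

definition Eq :: "(nat \<Rightarrow> real^3) \<Rightarrow> nat \<Rightarrow> nat \<Rightarrow> real \<Rightarrow> quat" where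
  "Eq V n i s = (cos (2 * th V n i * s), sin (2 * th V n i * s) *\<^sub>R Nv V n i)"

definition Eqd :: "(nat \<Rightarrow> real^3) \<Rightarrow> nat \<Rightarrow> nat \<Rightarrow> real \<Rightarrow> quat" where
  "Eqd V n i s = (- 2 * th V n i * sin (2 * th V n i * s), (2 * th V n i * cos (2 * th V n i * s)) *\<^sub>R Nv V n i)"

fun Qp :: "(nat \<Rightarrow> real^3) \<Rightarrow> nat \<Rightarrow> nat \<Rightarrow> quat" where
  "Qp V n 0 = qone"
| "Qp V n (Suc k) = qmult (Eq V n k 1) (Qp V n k)"

definition qq :: "(nat \<Rightarrow> real^3) \<Rightarrow> nat \<Rightarrow> real \<Rightarrow> quat" where
  "qq V n t = qmult (Eq V n (nat \<lfloor>t\<rfloor>) (t - of_int \<lfloor>t\<rfloor>)) (Qp V n (nat \<lfloor>t\<rfloor>))"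

lemma Eq_zero[simp]: "Eq V n i 0 = qone"
  by (simp add: Eq_def qone_def)

lemma Eq_deriv: "((\<lambda>t. Eq V n i (t - c)) has_vector_derivative Eqd V n i (t - c)) (at t)"
  unfolding Eq_def Eqd_def
  by (auto intro!: derivative_eq_intros simp: has_real_derivative_iff_has_vector_derivative[symmetric])

locale edges =
  fixes V :: "nat \<Rightarrow> real^3" and n :: nat
  assumes npos: "n \<ge> 1"
    and unit: "\<And>i. i < n \<Longrightarrow> norm (V i) = 1"
    and nonpar: "\<And>i. i < n \<Longrightarrow> \<bar>V i \<bullet> V ((i+1) mod n)\<bar> < 1"
begin

lemma unit': "norm (V (i mod n)) = 1"
  using unit npos by simp

lemma nonpar': "\<bar>V (i mod n) \<bullet> V ((i+1) mod n)\<bar> < 1"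
proof -
  have "(i mod n + 1) mod n = (i+1) mod n" by (simp add: mod_Suc_eq)
  then show ?thesis using nonpar[of "i mod n"] npos by simp
qed

lemma th_bounds: "0 < th V n i" "th V n i < pi" "sin (th V n i) > 0"
proof -
  have "-1 < V (i mod n) \<bullet> V ((i+1) mod n)" "V (i mod n) \<bullet> V ((i+1) mod n) < 1"
    using nonpar'[of i] by auto
  then show "0 < th V n i" "th V n i < pi" unfolding th_def
    using arccos_lt_bounded by auto
  then show "sin (th V n i) > 0" by (simp add: sin_gt_zero)
qed

lemma Nv_unit: "Nv V n i \<bullet> Nv V n i = 1"
proof -
  let ?a = "V (i mod n)" and ?b = "V ((i+1) mod n)"
  have "(norm (cross3 ?a ?b))^2 + (?a \<bullet> ?b)^2 = 1"
    using norm_cross_dot[of ?a ?b] unit'[of i] unit'[of "i+1"] by simp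
  moreover have "cos (th V n i) = ?a \<bullet> ?b"
    unfolding th_def using nonpar'[of i] by simp
  ultimately have "(norm (cross3 ?a ?b))^2 = (sin (th V n i))^2"
    by (metis add_diff_cancel_right' sin_squared_eq)
  then show ?thesis using th_bounds(3)[of i]
    unfolding Nv_def by (simp add: power2_norm_eq_inner[symmetric] power2_eq_square)
qed

lemma norm_Eq: "norm (Eq V n i s) = 1"
proof -
  have "(norm (Eq V n i s))^2 = 1"
    unfolding norm_quat_sq Eq_def using Nv_unit[of i]
    by (simp add: power2_eq_square)
  then show ?thesis using norm_ge_zero[of "Eq V n i s"] by (simp add: power2_eq_1_iff)
qed

lemma norm_Qp: "norm (Qp V n k) = 1"
  by (induction k) (auto simp: norm_qmult norm_Eq qone_def)

lemma qq_piece: "real k \<le> t \<Longrightarrow> t < real k + 1 \<Longrightarrow> qq V n t = qmult (Eq V n k (t - real k)) (Qp V n k)"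
proof -
  assume "real k \<le> t" "t < real k + 1"
  then have "\<lfloor>t\<rfloor> = int k" by (simp add: floor_eq_iff)
  then show ?thesis unfolding qq_def by simp
qed

lemma qq_nat: "qq V n (real k) = Qp V n k"
  using qq_piece[of k "real k"] by simp

lemma qq_piece': "real k \<le> t \<Longrightarrow> t \<le> real k + 1 \<Longrightarrow> qq V n t = qmult (Eq V n k (t - real k)) (Qp V n k)"
proof -
  assume "real k \<le> t" "t \<le> real k + 1"
  then consider "t < real k + 1" | "t = real k + 1" by linarith
  then show ?thesis
  proof cases
    case 1 then show ?thesis using qq_piece \<open>real k \<le> t\<close> by auto
  next
    case 2
    have "qq V n (real (Suc k)) = qmult (Eq V n k 1) (Qp V n k)" using qq_nat[of "Suc k"] by simp
    moreover have "t = real (Suc k)" "t - real k = 1" using 2 by auto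
    ultimately show ?thesis by metis
  qed
qed

lemma qq_cont: "continuous_on {0..real m} (qq V n)"
proof (induction m)
  case 0 then show ?case by simp
next
  case (Suc m)
  have "continuous_on {real m..real m + 1} (\<lambda>t. qmult (Eq V n m (t - real m)) (Qp V n m))"
    unfolding Eq_def
    by (rule bounded_linear.continuous_on[OF bl_qmult_left]) (auto intro!: continuous_intros)
  then have "continuous_on {real m..real m + 1} (qq V n)"
    by (rule continuous_on_eq) (simp add: qq_piece'[symmetric])
  then have "continuous_on ({0..real m} \<union> {real m..real m + 1}) (qq V n)"
    using Suc by (intro continuous_on_closed_Un) auto
  moreover have "{0..real m} \<union> {real m..real m + 1} = {0..real (Suc m)}" by auto
  ultimately show ?case by simp
qed

lemma qq_deriv:
  assumes "t \<in> {real k<..<real k + 1}"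
  shows "(qq V n has_vector_derivative qmult (Eqd V n k (t - real k)) (Qp V n k)) (at t)"
proof (rule has_vector_derivative_transform_within_open)
  show "((\<lambda>t. qmult (Eq V n k (t - real k)) (Qp V n k)) has_vector_derivative
          qmult (Eqd V n k (t - real k)) (Qp V n k)) (at t)"
    by (rule bounded_linear.has_vector_derivative[OF bl_qmult_left Eq_deriv])
  show "open {real k<..<real k + 1}" by simp
  show "t \<in> {real k<..<real k + 1}" by fact
  show "\<And>y. y \<in> {real k<..<real k + 1} \<Longrightarrow> qmult (Eq V n k (y - real k)) (Qp V n k) = qq V n y"
    by (subst qq_piece[of k]) auto
qed

lemma pc_piece:
  assumes "real k \<le> t" "t < real k + 1"
  shows "polygon_curve n V t = arc (V (k mod n)) (V ((k+1) mod n)) (t - real k)"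
proof -
  have "\<lfloor>t\<rfloor> = int k" using assms by (simp add: floor_eq_iff)
  then show ?thesis unfolding polygon_curve_def by simp
qed

lemma pc_deriv:
  assumes "t \<in> {real k<..<real k + 1}"
  defines "a \<equiv> V (k mod n)" and "b \<equiv> V ((k+1) mod n)"
  shows "(polygon_curve n V has_vector_derivative
     ((- th V n k * cos ((1-(t - real k))*th V n k) / sin (th V n k)) *\<^sub>R a +
      (th V n k * cos ((t - real k)*th V n k) / sin (th V n k)) *\<^sub>R b)) (at t)"
proof (rule has_vector_derivative_transform_within_open)
  have s: "sin (arccos (a \<bullet> b)) \<noteq> 0" using th_bounds(3)[of k] unfolding th_def a_def b_def by simp
  show "((\<lambda>t. arc a b (t - real k)) has_vector_derivative
     ((- th V n k * cos ((1-(t - real k))*th V n k) / sin (th V n k)) *\<^sub>R a +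
      (th V n k * cos ((t - real k)*th V n k) / sin (th V n k)) *\<^sub>R b)) (at t)"
    unfolding arc_def Let_def th_def a_def[symmetric] b_def[symmetric] using s
    by (auto intro!: derivative_eq_intros simp: field_simps)
  show "open {real k<..<real k + 1}" by simp
  show "t \<in> {real k<..<real k + 1}" by fact
  show "\<And>y. y \<in> {real k<..<real k + 1} \<Longrightarrow> arc a b (y - real k) = polygon_curve n V y"
    by (subst pc_piece[of k]) (auto simp: a_def b_def)
qed

lemma omega:
  assumes "norm C = 1"
  shows "qmult (2 *\<^sub>R qmult (Eqd V n k s) C) (qconj (qmult (Eq V n k s) C)) = (0, (4 * th V n k) *\<^sub>R Nv V n k)"
proof -
  have CC: "qmult C (qconj C) = qone" using assms by (simp add: qmult_qconj_self qone_def)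
  have "qmult (2 *\<^sub>R qmult (Eqd V n k s) C) (qconj (qmult (Eq V n k s) C))
      = 2 *\<^sub>R qmult (Eqd V n k s) (qmult (qmult C (qconj C)) (qconj (Eq V n k s)))"
    by (simp add: qmult_scaleR_left qconj_qmult qmult_assoc)
  also have "\<dots> = 2 *\<^sub>R qmult (Eqd V n k s) (qconj (Eq V n k s))" by (simp add: CC)
  also have "\<dots> = (0, (4 * th V n k) *\<^sub>R Nv V n k)"
    using Nv_unit[of k]
    by (simp add: Eqd_def Eq_def qmult_def qconj_def cross_mult_left cross_mult_right algebra_simps)
       (simp add: scaleR_add_left[symmetric] distrib_left[symmetric])
  finally show ?thesis .
qed

lemma rolling_qq: "rolling 3 n V (qq V n)"
  unfolding rolling_def
proof (intro conjI ballI impI)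
  show "qq V n 0 = qone" using qq_nat[of 0] by simp
  show "continuous_on {0..real n} (qq V n)" by (rule qq_cont)
  show "norm (qq V n t) = 1" if "t \<in> {0..real n}" for t
    unfolding qq_def by (simp add: norm_qmult norm_Eq norm_Qp)
  fix t assume t: "t \<in> {0<..<real n}" "t \<notin> \<int>"
  define k where "k = nat \<lfloor>t\<rfloor>"
  have fl: "\<lfloor>t\<rfloor> = int k" using t unfolding k_def by simp
  have "real k \<le> t" "t < real k + 1" using fl by (simp_all add: floor_eq_iff)
  moreover have "t \<noteq> real k" using t(2) by (metis Ints_of_nat)
  ultimately have tk: "t \<in> {real k<..<real k + 1}" by auto
  define a where "a = V (k mod n)"
  define b where "b = V ((k+1) mod n)"
  define s where "s = t - real k"
  define \<theta> where "\<theta> = th V n k"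
  have thab: "\<theta> = arccos (a \<bullet> b)" unfolding \<theta>_def th_def a_def b_def by simp
  have ab: "norm a = 1" "norm b = 1" unfolding a_def b_def by (simp_all add: unit')
  have sn: "sin \<theta> > 0" unfolding \<theta>_def by (rule th_bounds)
  have ab1: "-1 \<le> a \<bullet> b" "a \<bullet> b \<le> 1" using nonpar'[of k] unfolding a_def b_def by auto
  have pc: "polygon_curve n V t = arc a b s"
    unfolding a_def b_def s_def using pc_piece tk by auto
  have Nv: "Nv V n k = (1 / sin \<theta>) *\<^sub>R cross3 a b"
    unfolding Nv_def \<theta>_def a_def b_def by simp
  have ac: "cross3 (cross3 a b) (arc a b s) = (- cos ((1-s)*\<theta>)) *\<^sub>R a + cos (s*\<theta>) *\<^sub>R b"
           "cross3 a b \<bullet> arc a b s = 0"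
    using arc_cross[OF ab, of s] sn ab1 unfolding thab by auto
  show "\<exists>q' v'. (qq V n has_vector_derivative q') (at t) \<and>
                 (polygon_curve n V has_vector_derivative v') (at t) \<and>
                 (let \<omega> = qmult (2 *\<^sub>R q') (qconj (qq V n t)) in
                    fst \<omega> = 0 \<and>
                    (3 + 1) *\<^sub>R v' = cross3 (snd \<omega>) (polygon_curve n V t) \<and>
                    snd \<omega> \<bullet> polygon_curve n V t = 0)"
  proof (intro exI conjI)
    show "(qq V n has_vector_derivative qmult (Eqd V n k (t - real k)) (Qp V n k)) (at t)"
      by (rule qq_deriv[OF tk])
    show "(polygon_curve n V has_vector_derivative
     ((- \<theta> * cos ((1-s)*\<theta>) / sin \<theta>) *\<^sub>R a +
      (\<theta> * cos (s*\<theta>) / sin \<theta>) *\<^sub>R b)) (at t)"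
      using pc_deriv[OF tk] unfolding a_def b_def s_def \<theta>_def .
    have qt: "qq V n t = qmult (Eq V n k (t - real k)) (Qp V n k)"
      using tk qq_piece by auto
    have om: "qmult (2 *\<^sub>R qmult (Eqd V n k (t - real k)) (Qp V n k)) (qconj (qq V n t))
        = (0, (4 * \<theta> / sin \<theta>) *\<^sub>R cross3 a b)"
      unfolding qt omega[OF norm_Qp] Nv \<theta>_def by simp
    show "let \<omega> = qmult (2 *\<^sub>R qmult (Eqd V n k (t - real k)) (Qp V n k)) (qconj (qq V n t)) in
                    fst \<omega> = 0 \<and>
                    (3 + 1) *\<^sub>R ((- \<theta> * cos ((1-s)*\<theta>) / sin \<theta>) *\<^sub>R a +
      (\<theta> * cos (s*\<theta>) / sin \<theta>) *\<^sub>R b) = cross3 (snd \<omega>) (polygon_curve n V t) \<and>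
                    snd \<omega> \<bullet> polygon_curve n V t = 0"
      unfolding om Let_def pc using sn
      by (simp add: cross_mult_left ac scaleR_add_right algebra_simps)
  qed
qed

lemma qq_end: "qq V n (real n) = Qp V n n"
  by (rule qq_nat)

lemma trivial_if: "Qp V n n = qone \<Longrightarrow> trivial_lifted_monodromy 3 n V"
  unfolding trivial_lifted_monodromy_def using rolling_qq qq_end by auto

end




abbreviation tri :: "real^3 \<Rightarrow> real^3 \<Rightarrow> real^3 \<Rightarrow> real" where
  "tri x y z \<equiv> x \<bullet> cross3 y z"

lemma tri_I1: "tri f (cross3 f g) g = - (cross3 f g \<bullet> cross3 f g)"
  by (simp add: cross3_simps)

lemma tri_I2: "tri (cross3 f g) g (cross3 g h) = - (g \<bullet> g) * tri f g h"
  by (simp add: cross3_simps)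

lemma tri_swap: "tri x y z = tri y z x" "tri x y z = - tri y x z"
  by (simp_all add: cross3_simps)

lemma tri_zero: "tri x x z = 0" "tri x y x = 0" "tri x y y = 0"
  by (simp_all add: cross3_simps)

lemma sgn_nz: "x \<noteq> 0 \<Longrightarrow> norm (sgn x) = 1"
  by (simp add: norm_sgn)

lemma tri_sgn: "tri x y z \<noteq> 0 \<Longrightarrow> tri (sgn x) (sgn y) (sgn z) \<noteq> 0"
proof -
  assume h: "tri x y z \<noteq> 0"
  then have "x \<noteq> 0" "y \<noteq> 0" "z \<noteq> 0" by auto
  then show ?thesis using h
    by (simp add: sgn_div_norm cross_mult_left cross_mult_right)
qed

lemma sgn_eq_par: "sgn x = sgn y \<Longrightarrow> x \<noteq> 0 \<Longrightarrow> y = (norm y / norm x) *\<^sub>R x"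
proof -
  assume h: "sgn x = sgn y" "x \<noteq> 0"
  then have "y \<noteq> 0" by (metis sgn_zero_iff)
  have "y = norm y *\<^sub>R sgn y" using \<open>y \<noteq> 0\<close> by (simp add: sgn_div_norm)
  also have "\<dots> = norm y *\<^sub>R sgn x" using h by simp
  also have "\<dots> = (norm y / norm x) *\<^sub>R x" by (simp add: sgn_div_norm divide_inverse)
  finally show ?thesis .
qed

lemma distA: "tri f g h \<noteq> 0 \<Longrightarrow> sgn f \<noteq> sgn g"
proof
  assume h: "tri f g h \<noteq> 0" "sgn f = sgn g"
  then have "f \<noteq> 0" by auto
  then have "g = (norm g / norm f) *\<^sub>R f" using sgn_eq_par h by blast
  then have "tri f g h = 0" by (metis cross_mult_left inner_scaleR_right mult_zero_right dot_cross_self(1))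
  then show False using h by simp
qed

lemma distB: "tri f g h \<noteq> 0 \<or> tri f g k \<noteq> 0 \<Longrightarrow> sgn (cross3 f g) \<noteq> sgn (cross3 h k)"
proof
  assume h: "tri f g h \<noteq> 0 \<or> tri f g k \<noteq> 0" "sgn (cross3 f g) = sgn (cross3 h k)"
  have nz: "cross3 f g \<noteq> 0"
  proof
    assume "cross3 f g = 0"
    then have "tri f g h = 0" "tri f g k = 0" by (metis tri_swap(1) inner_zero_right)+
    then show False using h by simp
  qed
  then have e: "cross3 h k = (norm (cross3 h k) / norm (cross3 f g)) *\<^sub>R cross3 f g" using sgn_eq_par h by blast
  have "h \<bullet> cross3 h k = 0" "k \<bullet> cross3 h k = 0" by (simp_all add: dot_cross_self)
  then have "h \<bullet> cross3 f g = 0 \<or> cross3 h k = 0" "k \<bullet> cross3 f g = 0 \<or> cross3 h k = 0"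
    by (metis e inner_scaleR_right mult_eq_0_iff scaleR_eq_0_iff)+
  moreover have "cross3 h k \<noteq> 0" using h(2) nz by (metis sgn_zero_iff)
  ultimately have "h \<bullet> cross3 f g = 0" "k \<bullet> cross3 f g = 0" by auto
  then have "tri f g h = 0" "tri f g k = 0" by (metis tri_swap(1))+
  then show False using h by simp
qed

lemma distC: "f \<bullet> g \<noteq> 0 \<Longrightarrow> sgn f \<noteq> sgn (cross3 g h)"
proof
  assume h: "f \<bullet> g \<noteq> 0" "sgn f = sgn (cross3 g h)"
  then have "f \<noteq> 0" by auto
  then have e: "cross3 g h = (norm (cross3 g h) / norm f) *\<^sub>R f" using sgn_eq_par h by blast
  have "cross3 g h \<noteq> 0" using h \<open>f \<noteq> 0\<close> by (metis sgn_zero_iff)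
  then have "norm (cross3 g h) / norm f \<noteq> 0" using \<open>f \<noteq> 0\<close> by simp
  moreover have "g \<bullet> cross3 g h = 0" by (simp add: dot_cross_self)
  ultimately have "g \<bullet> f = 0" by (metis e inner_scaleR_right mult_eq_0_iff)
  then show False using h by (simp add: inner_commute)
qed

lemma sgn_orth1: "sgn f \<bullet> sgn (cross3 f g) = 0"
  by (simp add: sgn_div_norm dot_cross_self)
lemma sgn_orth2: "sgn (cross3 f g) \<bullet> sgn g = 0"
  by (simp add: sgn_div_norm dot_cross_self)

definition cc :: "real \<Rightarrow> real^3" where "cc s = vector [s^2, s, s - 1]"

lemma cc_tri: "tri (cc s) (cc t) (cc u) = - (s-t)*(s-u)*(t-u)"
  unfolding cc_def by (simp add: cross3_simps) algebra

lemma cc_tri_a: "tri (cc s) (cc t) (vector [1,0,0]) = t - s"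
  unfolding cc_def by (simp add: cross3_simps)

lemma cc_dot: "cc s \<bullet> cc t = s^2*t^2 + s*t + (s-1)*(t-1)"
  unfolding cc_def by (simp add: cross3_simps power2_eq_square)

lemma cc_dot_pos: "1 \<le> s \<Longrightarrow> 1 \<le> t \<Longrightarrow> cc s \<bullet> cc t > 0"
  unfolding cc_dot by (simp add: add_pos_nonneg)

lemma cc_nz: "cc s \<noteq> 0"
proof
  assume "cc s = 0"
  then have "cc s $ 2 = 0" "cc s $ 3 = 0" by simp_all
  then show False unfolding cc_def by simp
qed




context edges begin

lemma Eq_orth: "V (i mod n) \<bullet> V ((i+1) mod n) = 0 \<Longrightarrow> Eq V n i 1 = (-1, 0)"
  unfolding Eq_def th_def by simp

lemma Qp_orth: "(\<And>i. V (i mod n) \<bullet> V ((i+1) mod n) = 0) \<Longrightarrow> Qp V n k = ((-1)^k, 0)"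
  by (induction k) (auto simp: Eq_orth qone_def qmult_def)

end

definition Fe :: "nat \<Rightarrow> real^3" where "Fe j = cc (real j + 1)"

definition Ve :: "nat \<Rightarrow> nat \<Rightarrow> real^3" where
  "Ve m k = (if even k then sgn (Fe (k div 2)) else sgn (cross3 (Fe (k div 2)) (Fe (Suc (k div 2) mod m))))"

lemma Fe_tri: "i \<noteq> j \<Longrightarrow> i \<noteq> k \<Longrightarrow> j \<noteq> k \<Longrightarrow> tri (Fe i) (Fe j) (Fe k) \<noteq> 0"
  unfolding Fe_def cc_tri by simp

lemma Fe_dot: "Fe i \<bullet> Fe j \<noteq> 0"
  unfolding Fe_def using cc_dot_pos[of "real i + 1" "real j + 1"] by simp

lemma Fe_nz: "Fe i \<noteq> 0"
  unfolding Fe_def by (rule cc_nz)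

lemma Ve_even: "Ve m (2*x) = sgn (Fe x)" unfolding Ve_def by simp
lemma Ve_odd: "Ve m (2*x+1) = sgn (cross3 (Fe x) (Fe (Suc x mod m)))" unfolding Ve_def by simp
lemma Ve_odd': "Ve m (Suc (2*x)) = sgn (cross3 (Fe x) (Fe (Suc x mod m)))" unfolding Ve_def by simp

lemma idx2: "j < m \<Longrightarrow> (2*j+2) mod (2*m) = 2*(Suc j mod m)"
proof (cases "Suc j < m")
  case True then show ?thesis by simp
next
  case False
  assume "j < m" then have "Suc j = m" using False by simp
  then have "m = Suc j" by simp
  then show ?thesis by simp
qed

lemma idx3: "j < m \<Longrightarrow> (2*j+3) mod (2*m) = 2*(Suc j mod m) + 1"
proof (cases "Suc j < m")
  case True then show ?thesis by simp
next
  case False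
  assume "j < m" then have "Suc j = m" using False by simp
  then have "m = Suc j" by simp
  then show ?thesis by (simp add: mod_if)
qed

lemma sig_ne: assumes "m \<ge> 3" "j < m"
  shows "Suc j mod m \<noteq> j" "Suc (Suc j mod m) mod m \<noteq> Suc j mod m" "Suc (Suc j mod m) mod m \<noteq> j"
    "Suc j mod m < m"
  using assms by (auto simp: mod_Suc)

lemma Fe_cross_nz: assumes "m \<ge> 3" "j < m" shows "cross3 (Fe j) (Fe (Suc j mod m)) \<noteq> 0"
proof
  assume "cross3 (Fe j) (Fe (Suc j mod m)) = 0"
  then have "tri (Fe j) (Fe (Suc j mod m)) (Fe (Suc (Suc j mod m) mod m)) = 0"
    by (metis tri_swap(1) inner_zero_right)
  then show False using Fe_tri sig_ne[OF assms] by metis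
qed

lemma even_poly:
  assumes m: "m \<ge> 3"
  shows "spherical_polygon (2*m) (Ve m) \<and> nondegenerate_polygon (2*m) (Ve m) \<and> trivial_lifted_monodromy 3 (2*m) (Ve m)"
proof -
  let ?n = "2*m"
  have split: "\<exists>j<m. i = 2*j \<or> i = 2*j+1" if "i < ?n" for i
    using that by (intro exI[of _ "i div 2"]) auto
  have unit: "norm (Ve m i) = 1" if hi: "i < ?n" for i
  proof -
    obtain j where j: "j < m" "i = 2*j \<or> i = 2*j+1" using split[OF hi] by blast
    then show ?thesis using Fe_nz Fe_cross_nz[OF m j(1)] by (auto simp: Ve_even Ve_odd Ve_odd' norm_sgn)
  qed
  have orth: "Ve m (i mod ?n) \<bullet> Ve m ((i+1) mod ?n) = 0" for i
  proof -
    have "i mod ?n < ?n" using m by simp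
    then obtain j where j: "j < m" "i mod ?n = 2*j \<or> i mod ?n = 2*j+1" using split by blast
    have e: "(i+1) mod ?n = (i mod ?n + 1) mod ?n" by (simp add: mod_Suc_eq)
    show ?thesis using j(2)
    proof
      assume h: "i mod ?n = 2*j"
      then have "(i+1) mod ?n = 2*j+1" using e j(1) by simp
      then show ?thesis using h by (simp add: Ve_even Ve_odd Ve_odd' sgn_orth1)
    next
      assume h: "i mod ?n = 2*j+1"
      then have "(i+1) mod ?n = 2*(Suc j mod m)" using e idx2[OF j(1)] by simp
      then show ?thesis using h by (simp add: Ve_even Ve_odd Ve_odd' sgn_orth2)
    qed
  qed
  interpret edges "Ve m" ?n
  proof
    show "1 \<le> ?n" using m by simp
    fix i assume hi: "i < ?n"
    show "norm (Ve m i) = 1" using unit hi .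
    show "\<bar>Ve m i \<bullet> Ve m ((i+1) mod ?n)\<bar> < 1" using orth[of i] hi by simp
  qed
  have mono: "trivial_lifted_monodromy 3 ?n (Ve m)"
    by (rule trivial_if) (simp add: Qp_orth[OF orth] qone_def)
  have nondeg: "nondegenerate_polygon ?n (Ve m)"
    unfolding nondegenerate_polygon_def
  proof (intro allI impI)
    fix i assume "i < ?n"
    then obtain j where j: "j < m" "i = 2*j \<or> i = 2*j+1" using split by blast
    let ?s = "Suc j mod m"
    show "tri (Ve m (i mod ?n)) (Ve m ((i+1) mod ?n)) (Ve m ((i+2) mod ?n)) \<noteq> 0"
      using j(2)
    proof
      assume h: "i = 2*j"
      have "tri (Fe j) (cross3 (Fe j) (Fe ?s)) (Fe ?s) \<noteq> 0"
        unfolding tri_I1 using Fe_cross_nz[OF m j(1)] by simp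
      then show ?thesis using h j(1) idx2[OF j(1)]
        by (simp add: Ve_even Ve_odd Ve_odd' tri_sgn)
    next
      assume h: "i = 2*j+1"
      have "tri (cross3 (Fe j) (Fe ?s)) (Fe ?s) (cross3 (Fe ?s) (Fe (Suc ?s mod m))) \<noteq> 0"
        unfolding tri_I2 using Fe_nz[of ?s] Fe_tri sig_ne[OF m j(1)] by simp
      have e0: "i mod ?n = 2*j+1" using h j(1) by simp
      have "i + 1 = 2*j+2" "i+2 = 2*j+3" using h by simp_all
      then have e1: "(i+1) mod ?n = 2*(Suc j mod m)" and e2: "(i+2) mod ?n = 2*(Suc j mod m)+1"
        using idx2[OF j(1)] idx3[OF j(1)] by metis+
      show ?thesis unfolding e0 e1 e2 Ve_even Ve_odd by (rule tri_sgn) fact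
    qed
  qed
  have inj: "inj_on (Ve m) {..<?n}"
  proof (rule inj_onI)
    fix x y assume x: "x \<in> {..<?n}" and y: "y \<in> {..<?n}" and e: "Ve m x = Ve m y"
    obtain j1 where j1: "j1 < m" "x = 2*j1 \<or> x = 2*j1+1" using split x by blast
    obtain j2 where j2: "j2 < m" "y = 2*j2 \<or> y = 2*j2+1" using split y by blast
    show "x = y"
    proof (rule ccontr)
      assume ne: "x \<noteq> y"
      consider "x = 2*j1" "y = 2*j2" | "x = 2*j1" "y = 2*j2+1" | "x = 2*j1+1" "y = 2*j2" | "x = 2*j1+1" "y = 2*j2+1"
        using j1 j2 by blast
      then show False
      proof cases
        case 1
        then have "j1 \<noteq> j2" using ne by auto
        have "\<exists>l::nat. l < 3 \<and> l \<noteq> j1 \<and> l \<noteq> j2" by presburger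
        then obtain l where l0: "l < 3" "l \<noteq> j1" "l \<noteq> j2" by blast
        then have l: "l < m" "l \<noteq> j1" "l \<noteq> j2" using m by auto
        have "sgn (Fe j1) \<noteq> sgn (Fe j2)" by (rule distA[of _ _ "Fe l"]) (use Fe_tri \<open>j1 \<noteq> j2\<close> l in auto)
        then show False using e 1 by (simp add: Ve_even)
      next
        case 2
        have "sgn (Fe j1) \<noteq> sgn (cross3 (Fe j2) (Fe (Suc j2 mod m)))" by (rule distC) (rule Fe_dot)
        then show False using e 2 by (simp add: Ve_even Ve_odd Ve_odd')
      next
        case 3
        have "sgn (Fe j2) \<noteq> sgn (cross3 (Fe j1) (Fe (Suc j1 mod m)))" by (rule distC) (rule Fe_dot)
        then show False using e 3 by (simp add: Ve_even Ve_odd Ve_odd')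
      next
        case 4
        then have "j1 \<noteq> j2" using ne by auto
        have "tri (Fe j1) (Fe (Suc j1 mod m)) (Fe j2) \<noteq> 0 \<or> tri (Fe j1) (Fe (Suc j1 mod m)) (Fe (Suc j2 mod m)) \<noteq> 0"
        proof (cases "j2 = Suc j1 mod m")
          case True
          then show ?thesis using Fe_tri sig_ne[OF m j1(1)] by metis
        next
          case False
          then show ?thesis using Fe_tri sig_ne[OF m j1(1)] \<open>j1 \<noteq> j2\<close> by metis
        qed
        then have "sgn (cross3 (Fe j1) (Fe (Suc j1 mod m))) \<noteq> sgn (cross3 (Fe j2) (Fe (Suc j2 mod m)))"
          by (rule distB)
        then show False using e 4 by (simp add: Ve_odd Ve_odd')
      qed
    qed
  qed
  show ?thesis using mono nondeg inj unit m unfolding spherical_polygon_def by auto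
qed




definition Apt :: "real^3" where "Apt = vector [1,0,0]"
definition Bpt :: "real^3" where "Bpt = vector [1,1,0]"
definition Xpt :: "real^3" where "Xpt = vector [1,-1,1]"
definition Ypt :: "real^3" where "Ypt = vector [0,1,1]"

definition Fo :: "nat \<Rightarrow> nat \<Rightarrow> real^3" where
  "Fo L j = (if j = L then Apt else if j = 0 then - cc 1 else cc (real j + 1))"

definition Vo :: "nat \<Rightarrow> nat \<Rightarrow> real^3" where
  "Vo L k = (if k = 0 then sgn Apt else if k = 1 then sgn Bpt else if k = 2 then sgn Xpt
     else if k = 3 then sgn Ypt else if k = 4 then sgn (- Apt)
     else if even (k - 5) then sgn (Fo L ((k-5) div 2))
     else sgn (cross3 (Fo L ((k-5) div 2)) (Fo L ((k-5) div 2 + 1))))"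

lemma Vo_E: "Vo L (5 + 2*j) = sgn (Fo L j)"
  unfolding Vo_def by simp
lemma Vo_O: "Vo L (6 + 2*j) = sgn (cross3 (Fo L j) (Fo L (j+1)))"
proof -
  have "6 + 2*j - 5 = 2*j + 1" by simp
  then show ?thesis unfolding Vo_def by simp
qed

definition sp :: "real^3 \<Rightarrow> real \<times> real \<times> real" where
  "sp v = (sgn (v$1), sgn (v$2), sgn (v$3))"

lemma sp_sgn: "sp (sgn v) = sp v"
proof (cases "v = 0")
  case True then show ?thesis by simp
next
  case False
  then have "norm v > 0" by simp
  have c: "\<And>i. (sgn v)$i = v$i / norm v" by (simp add: sgn_div_norm divide_inverse mult.commute)
  have "sgn (norm v) = 1" using \<open>norm v > 0\<close> by simp
  then show ?thesis unfolding sp_def c sgn_divide by simp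
qed

lemma sp_eq: "sgn x = sgn y \<Longrightarrow> sp x = sp y"
  by (metis sp_sgn)

lemma cc1: "cc 1 = Bpt" unfolding cc_def Bpt_def by simp

lemma crossA1: "cross3 (- cc 1) Apt = vector [0,0,1]"
  unfolding cc_def Apt_def by (simp add: cross3_simps)
lemma crossA2: "cross3 (- cc 1) (cc 2) = vector [-1,1,2]"
  unfolding cc_def by (simp add: cross3_simps)
lemma crossA3: "cross3 (cc x) (cc (x+1)) = vector [1, x*x - x - 1, -(x*x + x)]"
  unfolding cc_def by (simp add: cross3_simps power2_eq_square algebra_simps)
lemma crossA4: "cross3 (cc s) Apt = vector [0, (s - 1), (- s)]"
  unfolding cc_def Apt_def by (simp add: cross3_simps)

lemma sp_vec: "sp (vector [a,b,c]) = (sgn a, sgn b, sgn c)"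
  unfolding sp_def by simp

lemma tri_scale: "tri (a *\<^sub>R x) (b *\<^sub>R y) (c *\<^sub>R z) = a*b*c * tri x y z"
  by (simp add: cross_mult_left cross_mult_right)

definition Go :: "nat \<Rightarrow> nat \<Rightarrow> real^3" where
  "Go L j = (if j = L then Apt else cc (real j + 1))"
definition so :: "nat \<Rightarrow> nat \<Rightarrow> real" where
  "so L j = (if j = 0 \<and> j \<noteq> L then -1 else 1)"

lemma Fo_Go: "Fo L j = so L j *\<^sub>R Go L j"
  unfolding Fo_def Go_def so_def by auto

lemma tri_cc_A: "tri (cc a) (cc b) Apt = b - a"
  unfolding Apt_def by (rule cc_tri_a)

lemma Go_tri: assumes "i \<le> L" "j \<le> L" "k \<le> L" "i \<noteq> j" "i \<noteq> k" "j \<noteq> k"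
  shows "tri (Go L i) (Go L j) (Go L k) \<noteq> 0"
proof -
  consider "i = L" | "j = L" | "k = L" | "i \<noteq> L \<and> j \<noteq> L \<and> k \<noteq> L" by blast
  then show ?thesis
  proof cases
    case 1
    then have "tri (Go L i) (Go L j) (Go L k) = tri (Go L j) (Go L k) (Go L i)" using tri_swap(1) by metis
    then show ?thesis using 1 assms unfolding Go_def by (simp add: tri_cc_A)
  next
    case 2
    then have "tri (Go L i) (Go L j) (Go L k) = tri (Go L k) (Go L i) (Go L j)" using tri_swap(1) by metis
    then show ?thesis using 2 assms unfolding Go_def by (simp add: tri_cc_A)
  next
    case 3
    then show ?thesis using assms unfolding Go_def by (simp add: tri_cc_A)
  next
    case 4
    then show ?thesis using assms unfolding Go_def by (simp add: cc_tri)
  qed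
qed

lemma Fo_tri: assumes "i \<le> L" "j \<le> L" "k \<le> L" "i \<noteq> j" "i \<noteq> k" "j \<noteq> k"
  shows "tri (Fo L i) (Fo L j) (Fo L k) \<noteq> 0"
  unfolding Fo_Go tri_scale using Go_tri[OF assms] by (simp add: so_def)

lemma Go_dot: "Go L i \<bullet> Go L j > 0"
proof -
  have "Apt \<bullet> cc x = x^2" "cc x \<bullet> Apt = x^2" for x unfolding Apt_def cc_def by (simp_all add: cross3_simps)
  moreover have "Apt \<bullet> Apt = 1" unfolding Apt_def by (simp add: cross3_simps)
  ultimately show ?thesis unfolding Go_def using cc_dot_pos
    by (auto simp: add_pos_pos)
qed

lemma Fo_dot: "Fo L i \<bullet> Fo L j \<noteq> 0"
  unfolding Fo_Go using Go_dot[of L i j] by (simp add: so_def)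

lemma Fo_nz: "Fo L i \<noteq> 0"
  using Fo_dot[of L i i] by auto


lemma sp_E: assumes "j < L"
  shows "sp (Fo L j) = (if j = 0 then (-1,-1,0) else (1,1,1))"
proof (cases "j = 0")
  case True
  then show ?thesis using assms unfolding Fo_def cc_def sp_def by simp
next
  case False
  have "real j > 0" using False by simp
  then show ?thesis using assms False unfolding Fo_def cc_def sp_def by simp
qed

lemma sp_O: assumes "j < L"
  shows "sp (cross3 (Fo L j) (Fo L (j+1))) =
    (if j = 0 then (if L = 1 then (0,0,1) else (-1,1,1)) else if j+1 < L then (1,1,-1) else (0,1,-1))"
proof -
  consider "j = 0" "L = 1" | "j = 0" "L \<noteq> 1" | "j \<noteq> 0" "j+1 < L" | "j \<noteq> 0" "j + 1 = L"
    using assms by linarith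
  then show ?thesis
  proof cases
    case 1
    then have "cross3 (Fo L j) (Fo L (j+1)) = vector [0,0,1]" unfolding Fo_def using crossA1 by simp
    then show ?thesis using 1 by (simp add: sp_vec)
  next
    case 2
    then have "cross3 (Fo L j) (Fo L (j+1)) = vector [-1,1,2]" unfolding Fo_def using crossA2 assms
      by (simp add: numeral_eq_Suc)
    then show ?thesis using 2 by (simp add: sp_vec)
  next
    case 3
    define x where "x = real j + 1"
    have x2: "x \<ge> 2" using 3 unfolding x_def by simp
    have "cross3 (Fo L j) (Fo L (j+1)) = cross3 (cc x) (cc (x+1))"
      unfolding Fo_def x_def using 3 by (simp add: add.commute add.left_commute)
    also have "\<dots> = vector [1, x*x - x - 1, -(x*x + x)]" by (rule crossA3)
    finally have e: "cross3 (Fo L j) (Fo L (j+1)) = vector [1, x*x - x - 1, -(x*x + x)]" .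
    have xx: "x*x \<ge> 2*x" using mult_right_mono[OF x2, of x] x2 by simp
    have "x*x - x - 1 > 0" using xx x2 by linarith
    moreover have "x*x + x > 0" using xx x2 by linarith
    ultimately show ?thesis using 3 unfolding e by (simp add: sp_vec)
  next
    case 4
    define x where "x = real j + 1"
    have x2: "x \<ge> 2" using 4 unfolding x_def by simp
    have "cross3 (Fo L j) (Fo L (j+1)) = cross3 (cc x) Apt"
      unfolding Fo_def x_def using 4 by simp
    also have "\<dots> = vector [0, x - 1, -x]" by (rule crossA4)
    finally have e: "cross3 (Fo L j) (Fo L (j+1)) = vector [0, x - 1, -x]" .
    show ?thesis using 4 x2 unfolding e by (simp add: sp_vec)
  qed
qed

lemma sp_pre: "sp Apt = (1,0,0)" "sp Bpt = (1,1,0)" "sp Xpt = (1,-1,1)" "sp Ypt = (0,1,1)" "sp (- Apt) = (-1,0,0)"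
  unfolding Apt_def Bpt_def Xpt_def Ypt_def sp_def by simp_all




lemma O_nz: "j < L \<Longrightarrow> cross3 (Fo L j) (Fo L (j+1)) \<noteq> 0"
proof
  assume "j < L" "cross3 (Fo L j) (Fo L (j+1)) = 0"
  then have "sp (cross3 (Fo L j) (Fo L (j+1))) = (0,0,0)" by (simp add: sp_def)
  then show False using sp_O[OF \<open>j < L\<close>] by (auto split: if_splits)
qed

lemma pre_nz: "Apt \<noteq> 0" "Bpt \<noteq> 0" "Xpt \<noteq> 0" "Ypt \<noteq> 0"
  unfolding Apt_def Bpt_def Xpt_def Ypt_def by (simp_all add: vec_eq_iff forall_3)

lemma Vo_small: "Vo L 0 = sgn Apt" "Vo L 1 = sgn Bpt" "Vo L 2 = sgn Xpt" "Vo L 3 = sgn Ypt"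
  "Vo L 4 = sgn (- Apt)"
  unfolding Vo_def by simp_all

lemma Vo1': "Vo L (Suc 0) = sgn Bpt" "Vo L (Suc (Suc 0)) = sgn Xpt" "Vo L (Suc (Suc (Suc 0))) = sgn Ypt"
  "Vo L (Suc (Suc (Suc (Suc 0)))) = sgn (- Apt)"
  unfolding Vo_def by simp_all

lemma Vo5: "L \<noteq> 0 \<Longrightarrow> Vo L 5 = sgn (- Bpt)"
  unfolding Vo_def by (simp add: Fo_def cc1)

lemma gadget_dot: "sgn Apt \<bullet> sgn Bpt = sqrt 2 / 2"
proof -
  have "norm Apt = 1" "norm Bpt = sqrt 2" "Apt \<bullet> Bpt = 1"
    unfolding Apt_def Bpt_def norm_eq_sqrt_inner by (simp_all add: cross3_simps)
  then have "sgn Apt \<bullet> sgn Bpt = 1 / sqrt 2" by (simp add: sgn_div_norm divide_inverse)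
  also have "\<dots> = (2 / sqrt 2) / 2" by simp
  also have "\<dots> = sqrt 2 / 2" by (subst real_div_sqrt) simp_all
  finally show ?thesis .
qed

lemma arccos_45: "arccos (sqrt 2 / 2) = pi / 4"
  using arccos_cos[of "pi/4"] cos_45 by simp

lemma tri_AB3: "tri (- Apt) (- Bpt) v = v$3" "tri v Apt Bpt = v$3"
  unfolding Apt_def Bpt_def by (simp_all add: cross3_simps)

lemma sp3: "sp v = (a, b, c) \<Longrightarrow> c \<noteq> 0 \<Longrightarrow> v$3 \<noteq> 0"
  unfolding sp_def by auto

lemma pre_tri: "tri Apt Bpt Xpt \<noteq> 0" "tri Bpt Xpt Ypt \<noteq> 0" "tri Xpt Ypt (- Apt) \<noteq> 0"
  "tri Ypt (- Apt) (- Bpt) \<noteq> 0"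
  unfolding Apt_def Bpt_def Xpt_def Ypt_def by (simp_all add: cross3_simps)

lemma odd_poly:
  assumes L: "L \<ge> 1"
  shows "spherical_polygon (2*L+5) (Vo L) \<and> nondegenerate_polygon (2*L+5) (Vo L) \<and> trivial_lifted_monodromy 3 (2*L+5) (Vo L)"
proof -
  let ?n = "2*L+5"
  let ?O = "\<lambda>j. cross3 (Fo L j) (Fo L (j+1))"
  have cls: "i < 5 \<or> (\<exists>j<L. i = 5+2*j) \<or> (\<exists>j<L. i = 6+2*j)" if "i < ?n" for i
  proof (cases "i < 5")
    case False
    define j where "j = (i-5) div 2"
    have "i - 5 = 2*j \<or> i - 5 = 2*j+1" unfolding j_def by presburger
    moreover have "j < L" using that False unfolding j_def by simp
    moreover have "i - 5 = 2*j \<or> i - 5 = 2*j+1 \<Longrightarrow> i = 5+2*j \<or> i = 6+2*j" using False by linarith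
    ultimately show ?thesis by blast
  qed simp
  have FoL: "Fo L L = Apt" unfolding Fo_def by simp
  have nx2: "Vo L ((7+2*j) mod ?n) = sgn (Fo L (j+1))" if "j < L" for j
  proof (cases "j+1 < L")
    case True
    then have e: "(7+2*j) mod ?n = 5 + 2*(j+1)" by simp
    show ?thesis unfolding e Vo_E ..
  next
    case False
    then have "j+1 = L" using that by simp
    then have e7: "7+2*j = ?n" by simp
    have "(7+2*j) mod ?n = 0" unfolding e7 by simp
    then show ?thesis using \<open>j+1 = L\<close> by (simp add: Vo_small Vo1' FoL)
  qed
  have nx3: "Vo L ((8+2*j) mod ?n) = (if j+1 < L then sgn (?O (j+1)) else sgn Bpt)" if "j < L" for j
  proof (cases "j+1 < L")
    case True
    then have e: "(8+2*j) mod ?n = 6 + 2*(j+1)" by simp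
    show ?thesis unfolding e Vo_O using True by simp
  next
    case False
    then have "j+1 = L" using that by simp
    then have e8: "8+2*j = 1 + ?n" by simp
    have "(8+2*j) mod ?n = 1" unfolding e8 mod_add_self2 by simp
    then show ?thesis using \<open>j+1 = L\<close> by (simp add: Vo_small Vo1')
  qed
  have unit: "norm (Vo L i) = 1" if hi: "i < ?n" for i
  proof -
    consider "i < 5" | j where "j < L" "i = 5+2*j" | j where "j < L" "i = 6+2*j" using cls[OF hi] by blast
    then show ?thesis
    proof cases
      case 1
      then have "i = 0 \<or> i = 1 \<or> i = 2 \<or> i = 3 \<or> i = 4" by auto
      then show ?thesis using pre_nz by (auto simp: Vo_small Vo1' norm_sgn)
    next
      case 2 then show ?thesis using Fo_nz by (simp add: Vo_E norm_sgn)
    next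
      case 3 then show ?thesis using O_nz by (simp add: Vo_O norm_sgn)
    qed
  qed
  have orth: "Vo L i \<bullet> Vo L ((i+1) mod ?n) = 0" if hi: "i < ?n" "i \<noteq> 0" "i \<noteq> 4" for i
  proof -
    consider "i < 5" | j where "j < L" "i = 5+2*j" | j where "j < L" "i = 6+2*j" using cls[OF hi(1)] by blast
    then show ?thesis
    proof cases
      case 1
      then have "i = 1 \<or> i = 2 \<or> i = 3" using hi by auto
      moreover have "Bpt \<bullet> Xpt = 0" "Xpt \<bullet> Ypt = 0" "Ypt \<bullet> (- Apt) = 0"
        unfolding Apt_def Bpt_def Xpt_def Ypt_def by (simp_all add: cross3_simps)
      ultimately show ?thesis by (auto simp: Vo_small Vo1' sgn_div_norm)
    next
      case 2
      then have "(i+1) mod ?n = 6 + 2*j" by simp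
      then show ?thesis using 2 by (simp add: Vo_E Vo_O sgn_orth1)
    next
      case 3
      then have "(i+1) mod ?n = (7+2*j) mod ?n" by simp
      then show ?thesis using 3 nx2[OF 3(1)] by (simp add: Vo_O sgn_orth2)
    qed
  qed
  have g0: "Vo L 0 \<bullet> Vo L 1 = sqrt 2 / 2" using gadget_dot by (simp add: Vo_small Vo1')
  have g4: "Vo L 4 \<bullet> Vo L 5 = sqrt 2 / 2" using gadget_dot Vo5 L
    by (simp add: Vo_small Vo1' Real_Vector_Spaces.sgn_minus)
  have s2: "sqrt 2 / 2 < (1::real)"
  proof -
    have a: "sqrt 2 < sqrt ((2::real)^2)" by (simp only: real_sqrt_less_iff) simp
    have b: "sqrt ((2::real)^2) = 2" using real_sqrt_abs[of 2] by simp
    show ?thesis using a b by simp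
  qed
  interpret edges "Vo L" ?n
  proof
    show "1 \<le> ?n" by simp
    fix i assume hi: "i < ?n"
    show "norm (Vo L i) = 1" using unit hi .
    show "\<bar>Vo L i \<bullet> Vo L ((i+1) mod ?n)\<bar> < 1"
    proof (cases "i = 0 \<or> i = 4")
      case True
      have m1: "(0+1) mod ?n = 1" by simp
      have m5: "(4+1) mod ?n = 5" using L by simp
      have A0: "\<bar>Vo L 0 \<bullet> Vo L ((0+1) mod ?n)\<bar> < 1" unfolding m1 g0 using s2 by simp
      have A4: "\<bar>Vo L 4 \<bullet> Vo L ((4+1) mod ?n)\<bar> < 1" unfolding m5 g4 using s2 by simp
      from True show ?thesis using A0 A4 by blast
    next
      case False
      then show ?thesis using orth[of i] hi by simp
    qed
  qed
  have m1: "(0+1) mod ?n = 1" "0 mod ?n = 0" by simp_all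
  have m5: "(4+1) mod ?n = 5" "4 mod ?n = 4" using L by simp_all
  have th0: "th (Vo L) ?n 0 = pi/4" unfolding th_def m1 g0 arccos_45 ..
  have th4: "th (Vo L) ?n 4 = pi/4" unfolding th_def m5 g4 arccos_45 ..
  have E0: "Eq (Vo L) ?n 0 1 = (0, Nv (Vo L) ?n 0)" unfolding Eq_def th0 by simp
  have N4: "Nv (Vo L) ?n 4 = Nv (Vo L) ?n 0"
    unfolding Nv_def th0 th4 m1 m5 using L by (simp add: Vo_small Vo1' Vo5 Real_Vector_Spaces.sgn_minus)
  have E4: "Eq (Vo L) ?n 4 1 = (0, Nv (Vo L) ?n 0)"
    unfolding Eq_def th4 N4 by simp
  have Eo: "Eq (Vo L) ?n i 1 = (-1, 0)" if "i < ?n" "i \<noteq> 0" "i \<noteq> 4" for i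
    by (rule Eq_orth) (use orth[OF that] that in simp)
  let ?N = "Nv (Vo L) ?n 0"
  have NN: "?N \<bullet> ?N = 1" by (rule Nv_unit)
  have Q5: "Qp (Vo L) ?n 5 = qone"
  proof -
    have "Qp (Vo L) ?n 5 = qmult (Eq (Vo L) ?n 4 1) (qmult (Eq (Vo L) ?n 3 1) (qmult (Eq (Vo L) ?n 2 1)
            (qmult (Eq (Vo L) ?n 1 1) (qmult (Eq (Vo L) ?n 0 1) qone))))"
      by (simp add: numeral_eq_Suc)
    also have "\<dots> = qmult (0, ?N) (qmult (-1,0) (qmult (-1,0) (qmult (-1,0) (0, ?N))))"
      using E0 E4 Eo[of 1] Eo[of 2] Eo[of 3] by simp
    also have "\<dots> = qone" using NN by (simp add: qmult_def qone_def)
    finally show ?thesis .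
  qed
  have Qd: "5 + d \<le> ?n \<Longrightarrow> Qp (Vo L) ?n (5 + d) = ((-1)^d, 0)" for d
  proof (induction d)
    case 0 then show ?case using Q5 by (simp add: qone_def)
  next
    case (Suc d)
    have sd: "5 + Suc d = Suc (5+d)" by simp
    have "Qp (Vo L) ?n (5 + Suc d) = qmult (Eq (Vo L) ?n (5+d) 1) (Qp (Vo L) ?n (5+d))"
      by (simp only: sd Qp.simps)
    also have "\<dots> = qmult (Eq (Vo L) ?n (5+d) 1) ((-1)^d, 0)" using Suc by simp
    finally have "Qp (Vo L) ?n (5 + Suc d) = qmult (Eq (Vo L) ?n (5+d) 1) ((-1)^d, 0)" .
    also have "\<dots> = qmult (-1, 0) ((-1)^d, 0)" using Eo[of "5+d"] Suc.prems by simp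
    also have "\<dots> = ((-1)^Suc d, 0)" by (simp add: qmult_def)
    finally show ?case .
  qed
  have "Qp (Vo L) ?n ?n = qone"
    using Qd[of "2*L"] by (simp add: qone_def add.commute)
  then have mono: "trivial_lifted_monodromy 3 ?n (Vo L)" by (rule trivial_if)
  have Ochar: "sp (Vo L k) \<in> {(-1,-1,0),(1,1,1),(0,0,1),(-1,1,1),(1,1,-1),(0,1,-1)}"
    if hk: "5 \<le> k" "k < ?n" for k
  proof -
    consider j where "j < L" "k = 5+2*j" | j where "j < L" "k = 6+2*j" using cls[of k] hk by auto
    then show ?thesis
    proof cases
      case 1 then show ?thesis using sp_E[OF 1(1)] by (simp add: Vo_E sp_sgn)
    next
      case 2 then show ?thesis using sp_O[OF 2(1)] by (simp add: Vo_O sp_sgn)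
    qed
  qed
  have Pchar: "sp (Vo L k) \<in> {(1,0,0),(1,1,0),(1,-1,1),(0,1,1),(-1,0,0)}" if "k < 5" for k
  proof -
    have "k = 0 \<or> k = 1 \<or> k = 2 \<or> k = 3 \<or> k = 4" using that by auto
    then show ?thesis by (auto simp: Vo_small Vo1' sp_sgn sp_pre)
  qed
  have inj: "inj_on (Vo L) {..<?n}"
  proof (rule inj_onI)
    fix x y assume x: "x \<in> {..<?n}" and y: "y \<in> {..<?n}" and e: "Vo L x = Vo L y"
    have spe: "sp (Vo L x) = sp (Vo L y)" using e by simp
    show "x = y"
    proof (rule ccontr)
      assume ne: "x \<noteq> y"
      consider "x < 5" "y < 5" | "x < 5" "5 \<le> y" | "5 \<le> x" "y < 5" | "5 \<le> x" "5 \<le> y" by linarith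
      then show False
      proof cases
        case 1
        then have "x \<in> {0,1,2,3,4}" "y \<in> {0,1,2,3,4}" by auto
        then show False using spe ne by (auto simp: Vo_small Vo1' sp_sgn sp_pre)
      next
        case 2 then show False using spe Pchar[of x] Ochar[of y] y by auto
      next
        case 3 then show False using spe Pchar[of y] Ochar[of x] x by auto
      next
        case 4
        consider j1 where "j1 < L" "x = 5+2*j1" | j1 where "j1 < L" "x = 6+2*j1" using cls[of x] x 4 by auto
        note cx = this
        consider j2 where "j2 < L" "y = 5+2*j2" | j2 where "j2 < L" "y = 6+2*j2" using cls[of y] y 4 by auto
        note cy = this
        show False
        proof (cases rule: cx)
          case (1 j1)
          show False
          proof (cases rule: cy)
            case (1 j2)
            then have "j1 \<noteq> j2" using ne \<open>x = 5+2*j1\<close> by auto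
            have "sgn (Fo L j1) \<noteq> sgn (Fo L j2)"
              by (rule distA[of _ _ "Fo L L"]) (rule Fo_tri; use \<open>j1 < L\<close> \<open>j2 < L\<close> \<open>j1 \<noteq> j2\<close> in simp)
            then show False using e \<open>x = 5+2*j1\<close> \<open>y = 5+2*j2\<close> by (simp add: Vo_E)
          next
            case (2 j2)
            have "sgn (Fo L j1) \<noteq> sgn (cross3 (Fo L j2) (Fo L (j2+1)))" by (rule distC) (rule Fo_dot)
            then show False using e \<open>x = 5+2*j1\<close> \<open>y = 6+2*j2\<close> by (simp add: Vo_E Vo_O)
          qed
        next
          case (2 j1)
          show False
          proof (cases rule: cy)
            case (1 j2)
            have "sgn (Fo L j2) \<noteq> sgn (cross3 (Fo L j1) (Fo L (j1+1)))" by (rule distC) (rule Fo_dot)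
            then show False using e \<open>x = 6+2*j1\<close> \<open>y = 5+2*j2\<close> by (simp add: Vo_E Vo_O)
          next
            case (2 j2)
            then have "j1 \<noteq> j2" using ne \<open>x = 6+2*j1\<close> by auto
            have "tri (Fo L j1) (Fo L (j1+1)) (Fo L j2) \<noteq> 0 \<or> tri (Fo L j1) (Fo L (j1+1)) (Fo L (j2+1)) \<noteq> 0"
            proof (cases "j2 = j1 + 1")
              case True
              then show ?thesis using Fo_tri[of j1 L "j1+1" "j2+1"] \<open>j2 < L\<close> by simp
            next
              case False
              then show ?thesis using Fo_tri[of j1 L "j1+1" "j2"] \<open>j2 < L\<close> \<open>j1 < L\<close> \<open>j1 \<noteq> j2\<close> by simp
            qed
            then have "sgn (cross3 (Fo L j1) (Fo L (j1+1))) \<noteq> sgn (cross3 (Fo L j2) (Fo L (j2+1)))"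
              by (rule distB)
            then show False using e \<open>x = 6+2*j1\<close> \<open>y = 6+2*j2\<close> by (simp add: Vo_O)
          qed
        qed
      qed
    qed
  qed
  have nondeg: "nondegenerate_polygon ?n (Vo L)"
    unfolding nondegenerate_polygon_def
  proof (intro allI impI)
    fix i assume hi: "i < ?n"
    have im: "i mod ?n = i" using hi by simp
    consider "i < 5" | j where "j < L" "i = 5+2*j" | j where "j < L" "i = 6+2*j" using cls[OF hi] by blast
    then show "tri (Vo L (i mod ?n)) (Vo L ((i+1) mod ?n)) (Vo L ((i+2) mod ?n)) \<noteq> 0"
    proof cases
      case 1
      have O0: "tri (- Apt) (- Bpt) (cross3 (Fo L 0) (Fo L (0+1))) \<noteq> 0"
      proof -
        have "sgn ((cross3 (Fo L 0) (Fo L (0+1)))$3) = 1" using sp_O[of 0 L] L by (auto simp: sp_def split: if_splits)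
        then show ?thesis unfolding tri_AB3 by auto
      qed
      have T0: "tri (Vo L 0) (Vo L 1) (Vo L 2) \<noteq> 0" unfolding Vo_small by (rule tri_sgn) (rule pre_tri(1))
      have T1: "tri (Vo L 1) (Vo L 2) (Vo L 3) \<noteq> 0" unfolding Vo_small by (rule tri_sgn) (rule pre_tri(2))
      have T2: "tri (Vo L 2) (Vo L 3) (Vo L 4) \<noteq> 0" unfolding Vo_small by (rule tri_sgn) (rule pre_tri(3))
      have v5: "Vo L 5 = sgn (- Bpt)" using Vo5 L by simp
      have T3: "tri (Vo L 3) (Vo L 4) (Vo L 5) \<noteq> 0" unfolding Vo_small v5
        by (rule tri_sgn) (rule pre_tri(4))
      have T4: "tri (Vo L 4) (Vo L 5) (Vo L 6) \<noteq> 0"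
      proof -
        have "Vo L 6 = sgn (cross3 (Fo L 0) (Fo L (0+1)))" using Vo_O[of L 0] by simp
        then show ?thesis unfolding Vo_small v5 using O0 by (simp add: tri_sgn)
      qed
      have "0 mod ?n = 0" "(0+1) mod ?n = 1" "(0+2) mod ?n = 2" "1 mod ?n = 1" "(1+1) mod ?n = 2" "(1+2) mod ?n = 3"
        "2 mod ?n = 2" "(2+1) mod ?n = 3" "(2+2) mod ?n = 4" "3 mod ?n = 3" "(3+1) mod ?n = 4" "(3+2) mod ?n = 5"
        "4 mod ?n = 4" "(4+1) mod ?n = 5" "(4+2) mod ?n = 6" using L by simp_all
      note ms = this
      have "i = 0 \<or> i = 1 \<or> i = 2 \<or> i = 3 \<or> i = 4" using 1 by auto
      then show ?thesis
      proof (elim disjE)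
        assume h: "i = 0" show ?thesis unfolding h ms by (rule T0)
      next
        assume h: "i = 1" show ?thesis unfolding h ms by (rule T1)
      next
        assume h: "i = 2" show ?thesis unfolding h ms by (rule T2)
      next
        assume h: "i = 3" show ?thesis unfolding h ms by (rule T3)
      next
        assume h: "i = 4" show ?thesis unfolding h ms by (rule T4)
      qed
    next
      case 2
      have e1: "(i+1) mod ?n = 6 + 2*j" using 2 by simp
      have "i + 2 = 7 + 2*j" using 2 by simp
      then have e2: "Vo L ((i+2) mod ?n) = sgn (Fo L (j+1))" using nx2[OF 2(1)] by simp
      have "tri (Fo L j) (cross3 (Fo L j) (Fo L (j+1))) (Fo L (j+1)) \<noteq> 0"
        unfolding tri_I1 using O_nz[OF 2(1)] by simp
      then show ?thesis unfolding im e2 e1 using 2 by (simp add: Vo_E Vo_O tri_sgn)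
    next
      case 3
      have "i + 1 = 7 + 2*j" "i + 2 = 8 + 2*j" using 3 by simp_all
      then have e1: "Vo L ((i+1) mod ?n) = sgn (Fo L (j+1))"
        and e2: "Vo L ((i+2) mod ?n) = (if j+1 < L then sgn (?O (j+1)) else sgn Bpt)"
        using nx2[OF 3(1)] nx3[OF 3(1)] by simp_all
      show ?thesis
      proof (cases "j+1 < L")
        case True
        have "tri (?O j) (Fo L (j+1)) (cross3 (Fo L (j+1)) (Fo L (j+1+1))) \<noteq> 0"
          unfolding tri_I2 using Fo_nz[of L "j+1"] Fo_tri[of j L "j+1" "j+2"] True by simp
        then show ?thesis unfolding im e1 e2 using 3 True by (simp add: Vo_O tri_sgn)
      next
        case False
        then have jL: "j + 1 = L" using 3 by simp
        have "tri (?O j) Apt Bpt \<noteq> 0"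
        proof -
          have "sgn ((?O j)$3) \<noteq> 0" using sp_O[OF 3(1)] jL by (auto simp: sp_def split: if_splits)
          then show ?thesis unfolding tri_AB3 by auto
        qed
        then show ?thesis unfolding im e1 e2 using 3 False jL FoL by (simp add: Vo_O tri_sgn)
      qed
    qed
  qed
  have "spherical_polygon ?n (Vo L)" unfolding spherical_polygon_def
    using inj unit by simp
  then show ?thesis using mono nondeg by blast
qed


theorem corollary1:
  fixes n :: nat
  assumes "n \<ge> 6"
  shows "\<exists>V. spherical_polygon n V \<and> nondegenerate_polygon n V \<and>
             trivial_lifted_monodromy 3 n V"
proof (cases "even n")
  case True
  then obtain m where m: "n = 2*m" by (elim evenE)
  then have "m \<ge> 3" using assms by simp
  then show ?thesis using even_poly m by blast
next
  case False
  then obtain k where k: "n = 2*k+1" by (elim oddE)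
  define L where "L = k - 2"
  have "L \<ge> 1" "n = 2*L+5" using assms k unfolding L_def by simp_all
  then show ?thesis using odd_poly by blast
qed

end
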